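(* Let $\Omega\subset\mathbb R^n$ be open, $v\colon\Omega\to\mathbb R^n$ a $C^1$ vector field with local flow $\phi$, let $e_1,\dots,e_r\colon\Omega\to\mathbb R$ be continuous, and $E=\bigcap_{k=1}^r\{x\in\Omega: e_k(x)\le0\}$. Suppose that for some (possibly empty) closed subsets $Z_k\subset\partial E$, $k=1,\dots,r$: (a) for each $k$, there is an open neighborhood $W_k$ of the set $\{e_k=0\}\cap\partial E\setminus Z_k$ such that $e_k|_{W_k}$ is a curvature bound function for $v$; (b) $Z_k\subset E^-\cup E^+$ for each $k$. Then $E$ is a bound set for $v$.
   Context: $\phi$ is the local dynamical system generated by $v$: $t\mapsto\phi_t(x_0)$ is the maximal solution of $\dot x=v(x)$ with $x(0)=x_0$. For $E\subset\Omega$, $E^+=\{x\in E:\ \phi_{-\epsilon_n}(x)\notin E$ for some sequence $0<\epsilon_n\to0\}$ (entrance set) and $E^-=\{x\in E:\ \phi_{\epsilon_n}(x)\notin E$ for some sequence $0<\epsilon_n\to0\}$ (exit set); $\partial E$ is the boundary of $E$ in $\Omega$. A closed set $E\subset\Omega$ is a bound set for $v$ if for every $\epsilon>0$ there is no $x\in\partial E$ with $\phi_t(x)\in E$ for all $t\in(-\epsilon,\epsilon)$. For $W\subset\Omega$ open, a $C^2$ function $e\colon W\to\mathbb R$ is a curvature bound function for $v$ if for every $x\in W$ with $e(x)=0$: $De(x)v(x)=0$ implies $v(x)^TD^2e(x)v(x)+De(x)Dv(x)v(x)>0$ ($De$ derivative, $D^2e$ Hessian, $Dv$ Jacobian). 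*)

theory Defs
  imports "HOL-Analysis.Analysis"
begin

definition C1_field_on :: "'a::euclidean_space set \<Rightarrow> ('a \<Rightarrow> 'a) \<Rightarrow> bool" where
  "C1_field_on \<Omega> v \<longleftrightarrow> (\<exists>Dv :: 'a \<Rightarrow> ('a \<Rightarrow>\<^sub>L 'a).
      (\<forall>x\<in>\<Omega>. (v has_derivative blinfun_apply (Dv x)) (at x)) \<and> continuous_on \<Omega> Dv)"

definition ode_solution :: "('a::euclidean_space \<Rightarrow> 'a) \<Rightarrow> 'a set \<Rightarrow> real set \<Rightarrow> (real \<Rightarrow> 'a) \<Rightarrow> bool" where
  "ode_solution v \<Omega> T y \<longleftrightarrow>
     (\<forall>t\<in>T. y t \<in> \<Omega> \<and> (y has_vector_derivative v (y t)) (at t within T))"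

definition existence_ivl :: "('a::euclidean_space \<Rightarrow> 'a) \<Rightarrow> 'a set \<Rightarrow> 'a \<Rightarrow> real set" where
  "existence_ivl v \<Omega> x0 = \<Union>{T. open T \<and> is_interval T \<and> 0 \<in> T \<and>
      (\<exists>y. y 0 = x0 \<and> ode_solution v \<Omega> T y)}"

text \<open>The local flow phi_t(x0): value at time t of the maximal solution through x0
  (well defined for t in the existence interval, by uniqueness for C^1 fields).\<close>
definition flow :: "('a::euclidean_space \<Rightarrow> 'a) \<Rightarrow> 'a set \<Rightarrow> real \<Rightarrow> 'a \<Rightarrow> 'a" where
  "flow v \<Omega> t x0 = (THE z. \<exists>T y. open T \<and> is_interval T \<and> 0 \<in> T \<and> t \<in> T \<and>
      y 0 = x0 \<and> ode_solution v \<Omega> T y \<and> y t = z)"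

definition entrance_set :: "('a::euclidean_space \<Rightarrow> 'a) \<Rightarrow> 'a set \<Rightarrow> 'a set \<Rightarrow> 'a set" where
  "entrance_set v \<Omega> E = {x\<in>E. \<exists>\<epsilon>::nat \<Rightarrow> real. (\<forall>n. 0 < \<epsilon> n) \<and> \<epsilon> \<longlonglongrightarrow> 0 \<and>
      (\<forall>n. - \<epsilon> n \<in> existence_ivl v \<Omega> x \<and> flow v \<Omega> (- \<epsilon> n) x \<notin> E)}"

definition exit_set :: "('a::euclidean_space \<Rightarrow> 'a) \<Rightarrow> 'a set \<Rightarrow> 'a set \<Rightarrow> 'a set" where
  "exit_set v \<Omega> E = {x\<in>E. \<exists>\<epsilon>::nat \<Rightarrow> real. (\<forall>n. 0 < \<epsilon> n) \<and> \<epsilon> \<longlonglongrightarrow> 0 \<and>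
      (\<forall>n. \<epsilon> n \<in> existence_ivl v \<Omega> x \<and> flow v \<Omega> (\<epsilon> n) x \<notin> E)}"

definition bdry_in :: "'a::euclidean_space set \<Rightarrow> 'a set \<Rightarrow> 'a set" where
  "bdry_in \<Omega> E = \<Omega> \<inter> frontier E"

definition bound_set :: "('a::euclidean_space \<Rightarrow> 'a) \<Rightarrow> 'a set \<Rightarrow> 'a set \<Rightarrow> bool" where
  "bound_set v \<Omega> E \<longleftrightarrow> E \<subseteq> \<Omega> \<and> closedin (top_of_set \<Omega>) E \<and>
     (\<forall>\<epsilon>>0. \<not> (\<exists>x\<in>bdry_in \<Omega> E. \<forall>t\<in>{-\<epsilon><..<\<epsilon>}.
         t \<in> existence_ivl v \<Omega> x \<and> flow v \<Omega> t x \<in> E))"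

definition C2_on_with :: "'a::euclidean_space set \<Rightarrow> ('a \<Rightarrow> real) \<Rightarrow> ('a \<Rightarrow> ('a \<Rightarrow>\<^sub>L real))
    \<Rightarrow> ('a \<Rightarrow> ('a \<Rightarrow>\<^sub>L ('a \<Rightarrow>\<^sub>L real))) \<Rightarrow> bool" where
  "C2_on_with W e De D2e \<longleftrightarrow>
     (\<forall>x\<in>W. (e has_derivative blinfun_apply (De x)) (at x) \<and>
             (De has_derivative blinfun_apply (D2e x)) (at x)) \<and> continuous_on W D2e"

definition curvature_bound_function :: "('a::euclidean_space \<Rightarrow> 'a) \<Rightarrow> 'a set \<Rightarrow> 'a set \<Rightarrow> ('a \<Rightarrow> real) \<Rightarrow> bool" where
  "curvature_bound_function v \<Omega> W e \<longleftrightarrow> open W \<and> W \<subseteq> \<Omega> \<and>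
     (\<exists>De D2e. C2_on_with W e De D2e \<and>
        (\<forall>x\<in>W. e x = 0 \<longrightarrow> De x (v x) = 0 \<longrightarrow>
            D2e x (v x) (v x) + De x (frechet_derivative v (at x) (v x)) > 0))"

end

theory Submission
  imports Defs
begin

definition sol :: "('a::euclidean_space \<Rightarrow> 'a) \<Rightarrow> 'a set \<Rightarrow> real set \<Rightarrow> (real \<Rightarrow> 'a) \<Rightarrow> bool" where
  "sol v \<Omega> T y \<longleftrightarrow> (\<forall>t\<in>T. y t \<in> \<Omega> \<and> (y has_vector_derivative v (y t)) (at t))"

lemma loc_lip:
  assumes "open \<Omega>" "C1_field_on \<Omega> v" "p \<in> \<Omega>"
  obtains \<delta> L where "\<delta> > 0" "cball p \<delta> \<subseteq> \<Omega>"
    "\<And>a b. a \<in> cball p \<delta> \<Longrightarrow> b \<in> cball p \<delta> \<Longrightarrow> norm (v a - v b) \<le> L * norm (a - b)"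
proof -
  obtain Dv where D: "\<forall>x\<in>\<Omega>. (v has_derivative blinfun_apply (Dv x)) (at x)" "continuous_on \<Omega> Dv"
    using assms(2) unfolding C1_field_on_def by blast
  obtain \<delta> where d: "\<delta> > 0" "cball p \<delta> \<subseteq> \<Omega>" using assms open_contains_cball by blast
  have "compact (Dv ` cball p \<delta>)"
    by (rule compact_continuous_image) (use D(2) d continuous_on_subset in auto)
  then obtain B where B: "\<forall>y\<in>Dv ` cball p \<delta>. norm y \<le> B"
    using compact_imp_bounded bounded_iff by metis
  show thesis
  proof (rule that[OF d])
    fix a b assume ab: "a \<in> cball p \<delta>" "b \<in> cball p \<delta>"
    show "norm (v a - v b) \<le> B * norm (a - b)"
    proof (rule differentiable_bound[where S="cball p \<delta>" and f'="\<lambda>x. blinfun_apply (Dv x)"])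
      fix x assume "x \<in> cball p \<delta>"
      then have "x \<in> \<Omega>" using d by blast
      then show "(v has_derivative blinfun_apply (Dv x)) (at x within cball p \<delta>)"
        using D(1) has_derivative_at_withinI by blast
      have "norm (Dv x) \<le> B" by (rule B[rule_format, OF imageI[OF \<open>x \<in> cball p \<delta>\<close>]])
      then show "onorm (blinfun_apply (Dv x)) \<le> B" by (metis norm_blinfun.rep_eq)
    qed (use ab in \<open>simp_all add: convex_cball\<close>)
  qed
qed

lemma uniq_loc:
  assumes O: "open \<Omega>" "C1_field_on \<Omega> v" and T: "open T"
    and s1: "sol v \<Omega> T y1" and s2: "sol v \<Omega> T y2"
    and s0: "s0 \<in> T" and eq: "y1 s0 = y2 s0"
  shows "\<exists>h>0. ball s0 h \<subseteq> T \<and> (\<forall>s\<in>ball s0 h. y1 s = y2 s)"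
proof -
  let ?p = "y1 s0"
  have pO: "?p \<in> \<Omega>" using s1 s0 unfolding sol_def by blast
  obtain \<delta> L where d: "\<delta>>0" "cball ?p \<delta> \<subseteq> \<Omega>"
    and Lip: "\<And>a b. a \<in> cball ?p \<delta> \<Longrightarrow> b \<in> cball ?p \<delta> \<Longrightarrow> norm (v a - v b) \<le> L * norm (a - b)"
    using loc_lip[OF O pO] by metis
  have der1: "\<And>t. t \<in> T \<Longrightarrow> (y1 has_vector_derivative v (y1 t)) (at t)"
    using s1 unfolding sol_def by blast
  have der2: "\<And>t. t \<in> T \<Longrightarrow> (y2 has_vector_derivative v (y2 t)) (at t)"
    using s2 unfolding sol_def by blast
  have c1: "continuous (at s0) y1" by (rule has_vector_derivative_continuous[OF der1[OF s0]])
  have c2: "continuous (at s0) y2" by (rule has_vector_derivative_continuous[OF der2[OF s0]])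
  obtain h1 where h1: "h1>0" "\<And>s. dist s s0 < h1 \<Longrightarrow> dist (y1 s) (y1 s0) < \<delta>"
    using c1 d(1) unfolding continuous_at_eps_delta by metis
  obtain h2 where h2: "h2>0" "\<And>s. dist s s0 < h2 \<Longrightarrow> dist (y2 s) (y2 s0) < \<delta>"
    using c2 d(1) unfolding continuous_at_eps_delta by metis
  obtain h3 where h3: "h3>0" "ball s0 h3 \<subseteq> T" using T s0 open_contains_ball by blast
  define h where "h = min (min (min h1 h2) h3 / 2) (1 / (2 * (\<bar>L\<bar> + 1)))"
  have hpos: "h > 0" unfolding h_def using h1 h2 h3 by (simp add: abs_add_one_gt_zero)
  have hlt: "h < h1" "h < h2" "h < h3" unfolding h_def using h1 h2 h3 by linarith+
  have hL: "\<bar>L\<bar> * h \<le> 1/2"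
  proof -
    have "h \<le> 1 / (2 * (\<bar>L\<bar> + 1))" unfolding h_def by linarith
    then have "(\<bar>L\<bar> + 1) * h \<le> (\<bar>L\<bar> + 1) * (1 / (2 * (\<bar>L\<bar> + 1)))"
      by (intro mult_left_mono) auto
    also have "\<dots> = 1/2" by (simp add: abs_add_one_gt_zero)
    finally show ?thesis using hpos by (simp add: algebra_simps)
  qed
  let ?I = "cball s0 h"
  have IT: "?I \<subseteq> T" using h3(2) hlt(3) by (auto simp: dist_commute)
  have in1: "y1 s \<in> cball ?p \<delta>" if "s \<in> ?I" for s
  proof -
    have "dist s s0 < h1" using that hlt(1) by (simp add: dist_commute)
    then have "dist (y1 s) ?p < \<delta>" by (rule h1(2))
    then show ?thesis by (simp add: dist_commute)
  qed
  have in2: "y2 s \<in> cball ?p \<delta>" if "s \<in> ?I" for s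
  proof -
    have "dist s s0 < h2" using that hlt(2) by (simp add: dist_commute)
    then have "dist (y2 s) ?p < \<delta>" using h2(2) eq by metis
    then show ?thesis by (simp add: dist_commute)
  qed
  define d where "d = (\<lambda>s. y1 s - y2 s)"
  have dder: "(d has_vector_derivative (v (y1 s) - v (y2 s))) (at s)" if "s \<in> T" for s
    unfolding d_def by (rule has_vector_derivative_diff[OF der1[OF that] der2[OF that]])
  have dcont: "continuous_on ?I d"
    using IT dder has_vector_derivative_continuous continuous_at_imp_continuous_on by blast
  have ncont: "continuous_on ?I (\<lambda>s. norm (d s))" by (rule continuous_on_norm[OF dcont])
  have s0I: "s0 \<in> ?I" using hpos by simp
  obtain sm where sm: "sm \<in> ?I" "\<And>s. s \<in> ?I \<Longrightarrow> norm (d s) \<le> norm (d sm)"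
    using continuous_attains_sup[OF compact_cball _ ncont] s0I by blast
  let ?M = "norm (d sm)"
  have bound: "norm (d s) \<le> ?M / 2" if s: "s \<in> ?I" for s
  proof -
    have "norm (d s - d s0) \<le> (\<bar>L\<bar> * ?M) * norm (s - s0)"
    proof (rule differentiable_bound[where S="?I" and f'="\<lambda>t u. u *\<^sub>R (v (y1 t) - v (y2 t))"])
      show "convex ?I" by (rule convex_cball)
      show "s \<in> ?I" by (rule s)
      show "s0 \<in> ?I" by (rule s0I)
      fix t assume t: "t \<in> ?I"
      then have tT: "t \<in> T" using IT by blast
      show "(d has_derivative (\<lambda>u. u *\<^sub>R (v (y1 t) - v (y2 t)))) (at t within ?I)"
        using dder[OF tT] unfolding has_vector_derivative_def by (rule has_derivative_at_withinI)
      have "onorm (\<lambda>u::real. u *\<^sub>R (v (y1 t) - v (y2 t))) = norm (v (y1 t) - v (y2 t))"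
      proof -
        have "onorm (\<lambda>x::real. x) = 1" by (rule onorm_id)
        then show ?thesis using onorm_scaleR_left[OF bounded_linear_ident, of "v (y1 t) - v (y2 t)"] by simp
      qed
      also have "\<dots> \<le> L * norm (y1 t - y2 t)" by (rule Lip[OF in1[OF t] in2[OF t]])
      also have "\<dots> \<le> \<bar>L\<bar> * norm (y1 t - y2 t)" by (simp add: mult_right_mono)
      also have "\<dots> \<le> \<bar>L\<bar> * ?M" using sm(2)[OF t] unfolding d_def by (simp add: mult_left_mono)
      finally show "onorm (\<lambda>u. u *\<^sub>R (v (y1 t) - v (y2 t))) \<le> \<bar>L\<bar> * ?M" .
    qed
    moreover have "d s0 = 0" unfolding d_def using eq by simp
    moreover have "norm (s - s0) \<le> h" using s by (simp add: dist_norm norm_minus_commute)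
    ultimately have "norm (d s) \<le> (\<bar>L\<bar> * ?M) * h"
      by (smt (verit, ccfv_SIG) abs_ge_zero diff_zero mult_left_mono norm_ge_zero zero_le_mult_iff)
    also have "\<dots> = (\<bar>L\<bar> * h) * ?M" by simp
    also have "\<dots> \<le> (1/2) * ?M" using hL by (intro mult_right_mono) auto
    finally show ?thesis by simp
  qed
  have "?M \<le> ?M / 2" by (rule bound[OF sm(1)])
  then have M0: "?M \<le> 0" by simp
  have "y1 s = y2 s" if "s \<in> ball s0 h" for s
  proof -
    have "s \<in> ?I" using that by simp
    then have "norm (d s) \<le> 0" using sm(2) M0 by fastforce
    then show ?thesis unfolding d_def by simp
  qed
  moreover have "ball s0 h \<subseteq> T" using IT by auto
  ultimately show ?thesis using hpos by blast
qed

lemma sol_of_ode: assumes "open T" "ode_solution v \<Omega> T y" shows "sol v \<Omega> T y"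
  unfolding sol_def
proof
  fix t assume t: "t \<in> T"
  have "y t \<in> \<Omega> \<and> (y has_vector_derivative v (y t)) (at t within T)"
    using assms(2) t unfolding ode_solution_def by blast
  moreover have "at t within T = at t" by (rule at_within_open[OF t assms(1)])
  ultimately show "y t \<in> \<Omega> \<and> (y has_vector_derivative v (y t)) (at t)" by simp
qed

lemma sol_subset: "sol v \<Omega> T y \<Longrightarrow> S \<subseteq> T \<Longrightarrow> sol v \<Omega> S y"
  unfolding sol_def by blast

lemma sol_cont: "sol v \<Omega> T y \<Longrightarrow> continuous_on T y"
  unfolding sol_def
  by (intro continuous_at_imp_continuous_on ballI has_vector_derivative_continuous) blast

lemma uniq:
  assumes O: "open \<Omega>" "C1_field_on \<Omega> v" and T: "open T" "is_interval T"
    and s1: "sol v \<Omega> T y1" and s2: "sol v \<Omega> T y2"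
    and a: "a \<in> T" and eq: "y1 a = y2 a" and t: "t \<in> T"
  shows "y1 t = y2 t"
proof -
  let ?S = "{s\<in>T. y1 s = y2 s}"
  have "open ?S" unfolding open_contains_ball
  proof
    fix s assume "s \<in> ?S"
    then obtain h where "h>0" "ball s h \<subseteq> T" "\<forall>u\<in>ball s h. y1 u = y2 u"
      using uniq_loc[OF O T(1) s1 s2] by blast
    then show "\<exists>e>0. ball s e \<subseteq> ?S" by blast
  qed
  then have op: "openin (top_of_set T) ?S" by (intro open_subset) auto
  have cont: "continuous_on T (\<lambda>s. y1 s - y2 s)"
    by (intro continuous_on_diff sol_cont[OF s1] sol_cont[OF s2])
  have "closedin (top_of_set T) {s\<in>T. y1 s - y2 s = 0}"
    by (rule continuous_closedin_preimage_constant[OF cont])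
  then have cl: "closedin (top_of_set T) ?S" by simp
  have "connected T" by (rule is_interval_connected[OF T(2)])
  then have "?S = {} \<or> ?S = T"
    by (rule connected_clopen[THEN iffD1, rule_format, OF _ conjI[OF op cl]])
  moreover have "a \<in> ?S" using a eq by simp
  ultimately have "?S = T" by auto
  then show ?thesis using t by auto
qed

lemma flow_eq:
  assumes O: "open \<Omega>" "C1_field_on \<Omega> v"
    and T: "open T" "is_interval T" "0 \<in> T" "t \<in> T" and y: "y 0 = x0" "ode_solution v \<Omega> T y"
  shows "flow v \<Omega> t x0 = y t"
  unfolding flow_def
proof (rule the_equality)
  show "\<exists>T' y'. open T' \<and> is_interval T' \<and> 0 \<in> T' \<and> t \<in> T' \<and> y' 0 = x0 \<and> ode_solution v \<Omega> T' y' \<and> y' t = y t"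
    using T y by (intro exI[of _ T] exI[of _ y]) simp
  fix z assume "\<exists>T' y'. open T' \<and> is_interval T' \<and> 0 \<in> T' \<and> t \<in> T' \<and> y' 0 = x0 \<and> ode_solution v \<Omega> T' y' \<and> y' t = z"
  then obtain T' y' where T': "open T'" "is_interval T'" "0 \<in> T'" "t \<in> T'" "y' 0 = x0" "ode_solution v \<Omega> T' y'" "y' t = z"
    by blast
  have s1: "sol v \<Omega> (T \<inter> T') y" using sol_of_ode[OF T(1) y(2)] sol_subset by blast
  have s2: "sol v \<Omega> (T \<inter> T') y'" using sol_of_ode[OF T'(1) T'(6)] sol_subset by blast
  have "y' t = y t"
  proof (rule uniq[OF O _ _ s2 s1, of 0])
    show "open (T \<inter> T')" using T(1) T'(1) by (rule open_Int)
    show "is_interval (T \<inter> T')" using T(2) T'(2) by (rule is_interval_Int)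
    show "0 \<in> T \<inter> T'" using T(3) T'(3) by (rule IntI)
    show "t \<in> T \<inter> T'" using T(4) T'(4) by (rule IntI)
    show "y' 0 = y 0" using T'(5) y(1) by simp
  qed
  then show "z = y t" using T'(7) by simp
qed

theorem corollary2p3:
  fixes \<Omega> :: "'a::euclidean_space set" and v :: "'a \<Rightarrow> 'a"
    and e :: "nat \<Rightarrow> 'a \<Rightarrow> real" and r :: nat and Z :: "nat \<Rightarrow> 'a set" and E :: "'a set"
  assumes "open \<Omega>" and "C1_field_on \<Omega> v"
    and "\<And>k. k \<in> {1..r} \<Longrightarrow> continuous_on \<Omega> (e k)"
    and E_def: "E = {x\<in>\<Omega>. \<forall>k\<in>{1..r}. e k x \<le> 0}"
    and "\<And>k. k \<in> {1..r} \<Longrightarrow> closedin (top_of_set \<Omega>) (Z k) \<and> Z k \<subseteq> bdry_in \<Omega> E"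
    and "\<And>k. k \<in> {1..r} \<Longrightarrow> \<exists>W. ({x\<in>\<Omega>. e k x = 0} \<inter> bdry_in \<Omega> E - Z k) \<subseteq> W \<and>
                                   curvature_bound_function v \<Omega> W (e k)"
    and "\<And>k. k \<in> {1..r} \<Longrightarrow> Z k \<subseteq> exit_set v \<Omega> E \<union> entrance_set v \<Omega> E"
  shows "bound_set v \<Omega> E"
proof -
  note O = assms(1) assms(2)
  have EO: "E \<subseteq> \<Omega>" unfolding E_def by blast
  have openpos: "open (e k -` {0<..} \<inter> \<Omega>)" if k: "k \<in> {1..r}" for k
    using continuous_on_open_vimage[OF assms(1)] assms(3)[OF k] open_greaterThan by blast
  have openneg: "open (e k -` {..<0} \<inter> \<Omega>)" if k: "k \<in> {1..r}" for k
    using continuous_on_open_vimage[OF assms(1)] assms(3)[OF k] open_lessThan by blast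
  have "\<Omega> - E = (\<Union>k\<in>{1..r}. e k -` {0<..} \<inter> \<Omega>)" unfolding E_def by auto
  moreover have "open (\<Union>k\<in>{1..r}. e k -` {0<..} \<inter> \<Omega>)" by (intro open_UN ballI openpos)
  ultimately have "open (\<Omega> - E)" by simp
  then have "openin (top_of_set \<Omega>) (\<Omega> - E)" by (intro open_subset) auto
  then have clE: "closedin (top_of_set \<Omega>) E" unfolding closedin_def using EO by simp
  have main: False if eps: "\<epsilon> > 0" and xB: "x \<in> bdry_in \<Omega> E"
    and H: "\<forall>t\<in>{-\<epsilon><..<\<epsilon>}. t \<in> existence_ivl v \<Omega> x \<and> flow v \<Omega> t x \<in> E" for \<epsilon> x
  proof -
    have "0 \<in> existence_ivl v \<Omega> x" using H eps by simp
    then obtain T0 y where T0: "open T0" "is_interval T0" "0 \<in> T0" "y 0 = x" "ode_solution v \<Omega> T0 y"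
      unfolding existence_ivl_def by blast
    have fl: "flow v \<Omega> t x = y t" if "t \<in> T0" for t
      by (rule flow_eq[OF O T0(1,2,3) that T0(4,5)])
    have yE: "y t \<in> E" if "t \<in> T0" "t \<in> {-\<epsilon><..<\<epsilon>}" for t
    proof -
      have "flow v \<Omega> t x \<in> E" using H that(2) by blast
      then show ?thesis using fl[OF that(1)] by simp
    qed
    have xE: "x \<in> E" using yE[OF T0(3)] eps T0(4) by simp
    have xO: "x \<in> \<Omega>" using xE EO by blast
    have ys: "sol v \<Omega> T0 y" by (rule sol_of_ode[OF T0(1) T0(5)])
    have "\<exists>k\<in>{1..r}. e k x = 0"
    proof (rule ccontr)
      assume nz: "\<not> (\<exists>k\<in>{1..r}. e k x = 0)"
      have le: "\<forall>k\<in>{1..r}. e k x \<le> 0" using xE unfolding E_def by blast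
      have neg: "\<forall>k\<in>{1..r}. e k x < 0" using nz le by force
      define U where "U = \<Omega> \<inter> (\<Inter>k\<in>{1..r}. e k -` {..<0} \<inter> \<Omega>)"
      have "open U" unfolding U_def
        by (intro open_Int assms(1) open_INT finite_atLeastAtMost ballI openneg)
      moreover have "x \<in> U" using xO neg unfolding U_def by auto
      moreover have "U \<subseteq> E" unfolding U_def E_def by (auto intro: less_imp_le)
      ultimately have "x \<in> interior E" using interior_maximal by blast
      moreover have "x \<in> frontier E" using xB unfolding bdry_in_def by blast
      ultimately show False unfolding frontier_def by blast
    qed
    then obtain k where k: "k \<in> {1..r}" "e k x = 0" by blast
    show False
    proof (cases "x \<in> Z k")
      case True
      then have "x \<in> exit_set v \<Omega> E \<union> entrance_set v \<Omega> E" using assms(7)[OF k(1)] by blast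
      then show False
      proof
        assume "x \<in> exit_set v \<Omega> E"
        then obtain es :: "nat \<Rightarrow> real" where es: "\<forall>n. 0 < es n" "es \<longlonglongrightarrow> 0"
          "\<forall>n. es n \<in> existence_ivl v \<Omega> x \<and> flow v \<Omega> (es n) x \<notin> E"
          unfolding exit_set_def by blast
        have "eventually (\<lambda>n. es n < \<epsilon>) sequentially" by (rule order_tendstoD(2)[OF es(2) eps])
        then obtain N where "es N < \<epsilon>" unfolding eventually_sequentially by blast
        moreover have "0 < es N" using es(1) by blast
        ultimately have "es N \<in> {-\<epsilon><..<\<epsilon>}" by simp
        then have "flow v \<Omega> (es N) x \<in> E" using H by blast
        then show False using es(3) by blast
      next
        assume "x \<in> entrance_set v \<Omega> E"
        then obtain es :: "nat \<Rightarrow> real" where es: "\<forall>n. 0 < es n" "es \<longlonglongrightarrow> 0"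
          "\<forall>n. - es n \<in> existence_ivl v \<Omega> x \<and> flow v \<Omega> (- es n) x \<notin> E"
          unfolding entrance_set_def by blast
        have "eventually (\<lambda>n. es n < \<epsilon>) sequentially" by (rule order_tendstoD(2)[OF es(2) eps])
        then obtain N where "es N < \<epsilon>" unfolding eventually_sequentially by blast
        moreover have "0 < es N" using es(1) by blast
        ultimately have "- es N \<in> {-\<epsilon><..<\<epsilon>}" by simp
        then have "flow v \<Omega> (- es N) x \<in> E" using H by blast
        then show False using es(3) by blast
      qed
    next
      case False
      obtain W where W: "({x\<in>\<Omega>. e k x = 0} \<inter> bdry_in \<Omega> E - Z k) \<subseteq> W"
        "curvature_bound_function v \<Omega> W (e k)" using assms(6)[OF k(1)] by blast
      have xW: "x \<in> W" using W(1) xO k(2) xB False by blast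
      obtain De D2e where Wo: "open W" "W \<subseteq> \<Omega>" and C2: "C2_on_with W (e k) De D2e"
        and curv: "\<forall>x\<in>W. e k x = 0 \<longrightarrow> De x (v x) = 0 \<longrightarrow>
            D2e x (v x) (v x) + De x (frechet_derivative v (at x) (v x)) > 0"
        using W(2) unfolding curvature_bound_function_def by blast
      have eder: "(e k has_derivative blinfun_apply (De z)) (at z)" if "z \<in> W" for z
        using C2 that unfolding C2_on_with_def by blast
      have Deder: "(De has_derivative blinfun_apply (D2e z)) (at z)" if "z \<in> W" for z
        using C2 that unfolding C2_on_with_def by blast
      obtain Dv where Dv: "\<forall>x\<in>\<Omega>. (v has_derivative blinfun_apply (Dv x)) (at x)"
        using assms(2) unfolding C1_field_on_def by blast
      have vder: "(v has_derivative blinfun_apply (Dv x)) (at x)" using Dv xO by blast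
      have fd: "frechet_derivative v (at x) = blinfun_apply (Dv x)"
        by (rule frechet_derivative_at[OF vder, symmetric])
      define c where "c = D2e x (v x) (v x) + De x (Dv x (v x))"
      have yder: "(y has_derivative (\<lambda>s. s *\<^sub>R v (y t))) (at t)" if "t \<in> T0" for t
        using ys that unfolding sol_def has_vector_derivative_def by blast
      obtain \<delta>W where dW: "\<delta>W > 0" "ball x \<delta>W \<subseteq> W" using Wo(1) xW open_contains_ball by blast
      have ycont: "continuous (at 0) y" using yder[OF T0(3)] by (rule has_derivative_continuous)
      obtain \<rho>1 where r1: "\<rho>1 > 0" "\<And>t. dist t 0 < \<rho>1 \<Longrightarrow> dist (y t) (y 0) < \<delta>W"
        using ycont dW(1) unfolding continuous_at_eps_delta by metis
      obtain \<rho>2 where r2: "\<rho>2 > 0" "ball 0 \<rho>2 \<subseteq> T0" using T0(1,3) open_contains_ball by blast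
      define \<rho> where "\<rho> = min \<rho>1 (min \<rho>2 \<epsilon>)"
      have rpos: "\<rho> > 0" unfolding \<rho>_def using r1 r2 eps by simp
      have inT: "t \<in> T0" if "\<bar>t\<bar> < \<rho>" for t
        using that r2(2) unfolding \<rho>_def by (auto simp: dist_real_def)
      have inI: "t \<in> {-\<epsilon><..<\<epsilon>}" if "\<bar>t\<bar> < \<rho>" for t
        using that unfolding \<rho>_def by auto
      have inW: "y t \<in> W" if "\<bar>t\<bar> < \<rho>" for t
      proof -
        have "dist t 0 < \<rho>1" using that unfolding \<rho>_def by (simp add: dist_real_def)
        then have "dist (y t) x < \<delta>W" using r1(2) T0(4) by metis
        then show ?thesis using dW(2) by (auto simp: dist_commute)
      qed
      have gle: "e k (y t) \<le> 0" if "\<bar>t\<bar> < \<rho>" for t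
        using yE[OF inT[OF that] inI[OF that]] k(1) unfolding E_def by blast
      have gder: "DERIV (\<lambda>t. e k (y t)) t :> De (y t) (v (y t))" if "\<bar>t\<bar> < \<rho>" for t
      proof -
        have "((e k \<circ> y) has_derivative (blinfun_apply (De (y t)) \<circ> (\<lambda>s. s *\<^sub>R v (y t)))) (at t)"
          by (rule diff_chain_at[OF yder[OF inT[OF that]] eder[OF inW[OF that]]])
        moreover have "(blinfun_apply (De (y t)) \<circ> (\<lambda>s. s *\<^sub>R v (y t))) = (*) (De (y t) (v (y t)))"
          by (rule ext) (simp add: blinfun.scaleR_right mult.commute)
        ultimately show ?thesis unfolding has_field_derivative_def comp_def by simp
      qed
      have hder: "DERIV (\<lambda>t. De (y t) (v (y t))) 0 :> c"
      proof -
        have y0: "(y has_derivative (\<lambda>s. s *\<^sub>R v x)) (at 0)" using yder[OF T0(3)] T0(4) by simp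
        have De0: "(De has_derivative blinfun_apply (D2e x)) (at (y 0))" using Deder[OF xW] T0(4) by simp
        have v0: "(v has_derivative blinfun_apply (Dv x)) (at (y 0))" using vder T0(4) by simp
        have a1: "((\<lambda>t. De (y t)) has_derivative (\<lambda>s. D2e x (s *\<^sub>R v x))) (at 0)"
          using diff_chain_at[OF y0 De0] unfolding comp_def .
        have a2: "((\<lambda>t. v (y t)) has_derivative (\<lambda>s. Dv x (s *\<^sub>R v x))) (at 0)"
          using diff_chain_at[OF y0 v0] unfolding comp_def .
        have "((\<lambda>t. De (y t) (v (y t))) has_derivative
            (\<lambda>h. De (y 0) (Dv x (h *\<^sub>R v x)) + D2e x (h *\<^sub>R v x) (v (y 0)))) (at 0)"
          by (rule blinfun.FDERIV[OF a1 a2])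
        moreover have "(\<lambda>h. De (y 0) (Dv x (h *\<^sub>R v x)) + D2e x (h *\<^sub>R v x) (v (y 0))) = (*) c"
          by (rule ext) (simp add: T0(4) c_def blinfun.scaleR_right blinfun.scaleR_left algebra_simps)
        ultimately show ?thesis unfolding has_field_derivative_def by simp
      qed
      have h0: "De x (v x) = 0"
      proof -
        have "De (y 0) (v (y 0)) = 0"
        proof (rule DERIV_local_max[OF gder[of 0] rpos])
          show "\<bar>0::real\<bar> < \<rho>" using rpos by simp
          show "\<forall>t. \<bar>0 - t\<bar> < \<rho> \<longrightarrow> e k (y t) \<le> e k (y 0)"
            using gle T0(4) k(2) by simp
        qed
        then show ?thesis using T0(4) by simp
      qed
      have "D2e x (v x) (v x) + De x (frechet_derivative v (at x) (v x)) > 0"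
        using curv xW k(2) h0 by blast
      then have cpos: "c > 0" unfolding c_def fd .
      obtain d where d: "d > 0" "\<And>h. h > 0 \<Longrightarrow> h < d \<Longrightarrow> De (y 0) (v (y 0)) < De (y (0 + h)) (v (y (0 + h)))"
        using DERIV_pos_inc_right[OF hder cpos] by blast
      define t1 where "t1 = min d \<rho> / 2"
      have t1: "0 < t1" "t1 < d" "t1 < \<rho>" unfolding t1_def using d(1) rpos by auto
      obtain z where z: "0 < z" "z < t1"
        "e k (y t1) - e k (y 0) = (t1 - 0) * De (y z) (v (y z))"
        using MVT2[OF t1(1), of "\<lambda>t. e k (y t)" "\<lambda>t. De (y t) (v (y t))"] gder t1 by force
      have "De (y z) (v (y z)) > 0" using d(2)[of z] z t1 h0 T0(4) by simp
      then have "e k (y t1) > 0" using z(3) t1(1) T0(4) k(2) by simp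
      moreover have "e k (y t1) \<le> 0" using gle t1 by simp
      ultimately show False by simp
    qed
  qed
  show ?thesis unfolding bound_set_def using EO clE main by blast
qed

end
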